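(* Let $0<\alpha<\beta<\infty$, $\mathcal{F}\subset\mathcal{F}_B^{[\alpha,\beta]}$ star-shaped with $L_2$-diameter $d$, $N\in\mathbb{N}$, and define $\tau^*:=\sup\{\tau:N\tau^2\le\log\mathcal{M}^{\mathrm{loc}}_{\mathcal{F}}(\tau,c)\}$, where $c$ is a sufficiently large absolute constant. If $\epsilon<k/N$ for a constant $k>7$, then $$\max\{\tau^{*2}\wedge d^2,\ \epsilon\wedge d^2\}\asymp\tau^{*2}\wedge d^2$$ (equality up to constant factors).
   Context: $B\subseteq\mathbb{R}^p$ compact Borel with positive measure, $\mu$ a probability measure on $B$; $\mathcal{F}_B^{[\alpha,\beta]}$ the measurable $f:B\to[\alpha,\beta]$ with $\int_Bf\,d\mu=1$, $\|f-g\|_2=(\int_B(f-g)^2d\mu)^{1/2}$, $B_2(g,r)$ the closed $L_2$-ball; $\mathcal{F}$ star-shaped (some $f_0\in\mathcal{F}$ with $tf+(1-t)f_0\in\mathcal{F}$ for $f\in\mathcal{F},t\in[0,1]$). $\mathcal{M}(\eta,S)$ is the maximal cardinality of a subset of $S$ with pairwise $L_2$ distances $>\eta$, and $\mathcal{M}^{\mathrm{loc}}_{\mathcal{F}}(\tau,c)=\sup_{g\in\mathcal{F}}\mathcal{M}(\tau/c,\mathcal{F}\cap B_2(g,\tau))$. $a\asymp b$ means $a\lesssim b$ and $b\lesssim a$ with constants independent of $N,\epsilon$. *)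

theory Defs
  imports "HOL-Probability.Probability"
begin

definition dens_class :: "'a set \<Rightarrow> 'a measure \<Rightarrow> real \<Rightarrow> real \<Rightarrow> ('a \<Rightarrow> real) set" where
  "dens_class B \<mu> \<alpha> \<beta> = {f. f \<in> borel_measurable \<mu> \<and> (\<forall>x\<in>B. \<alpha> \<le> f x \<and> f x \<le> \<beta>)
                              \<and> (\<integral>x. f x \<partial>\<mu>) = 1}"

definition L2dist :: "'a measure \<Rightarrow> ('a \<Rightarrow> real) \<Rightarrow> ('a \<Rightarrow> real) \<Rightarrow> real" where
  "L2dist \<mu> f g = sqrt (\<integral>x. (f x - g x)^2 \<partial>\<mu>)"

definition L2ball :: "'a measure \<Rightarrow> ('a \<Rightarrow> real) \<Rightarrow> real \<Rightarrow> ('a \<Rightarrow> real) set" where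
  "L2ball \<mu> g r = {f. L2dist \<mu> f g \<le> r}"

definition L2diam :: "'a measure \<Rightarrow> ('a \<Rightarrow> real) set \<Rightarrow> real" where
  "L2diam \<mu> F = Sup {L2dist \<mu> f g | f g. f \<in> F \<and> g \<in> F}"

definition star_shaped_fun :: "('a \<Rightarrow> real) set \<Rightarrow> bool" where
  "star_shaped_fun F \<longleftrightarrow> (\<exists>f0\<in>F. \<forall>f\<in>F. \<forall>t::real. 0 \<le> t \<and> t \<le> 1 \<longrightarrow>
                              (\<lambda>x. t * f x + (1 - t) * f0 x) \<in> F)"

definition packing_number :: "'a measure \<Rightarrow> real \<Rightarrow> ('a \<Rightarrow> real) set \<Rightarrow> ereal" where
  "packing_number \<mu> \<eta> S = Sup {ereal (real (card P)) | P. finite P \<and> P \<subseteq> S \<and>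
        (\<forall>f\<in>P. \<forall>g\<in>P. f \<noteq> g \<longrightarrow> L2dist \<mu> f g > \<eta>)}"

definition loc_packing :: "'a measure \<Rightarrow> ('a \<Rightarrow> real) set \<Rightarrow> real \<Rightarrow> real \<Rightarrow> ereal" where
  "loc_packing \<mu> F \<tau> c = (SUP g\<in>F. packing_number \<mu> (\<tau> / c) (F \<inter> L2ball \<mu> g \<tau>))"

definition ln_ereal :: "ereal \<Rightarrow> ereal" where
  "ln_ereal x = (if x = \<infinity> then \<infinity> else if x > 0 then ereal (ln (real_of_ereal x)) else -\<infinity>)"

definition tau_star :: "'a measure \<Rightarrow> ('a \<Rightarrow> real) set \<Rightarrow> nat \<Rightarrow> real \<Rightarrow> real" where
  "tau_star \<mu> F N c = Sup {\<tau>. 0 \<le> \<tau> \<and> ereal (real N * \<tau>^2) \<le> ln_ereal (loc_packing \<mu> F \<tau> c)}"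

end

theory Submission imports Defs begin

lemma sq_int:
  assumes P: "prob_space \<mu>" and sp: "space \<mu> = B"
    and f: "f \<in> dens_class B \<mu> \<alpha> \<beta>" and g: "g \<in> dens_class B \<mu> \<alpha> \<beta>"
  shows "integrable \<mu> (\<lambda>x. (f x - g x)^2)"
    and "(\<integral>x. (f x - g x)^2 \<partial>\<mu>) \<le> (\<beta> - \<alpha>)^2"
proof -
  interpret prob_space \<mu> by (rule P)
  have fm: "f \<in> borel_measurable \<mu>" "g \<in> borel_measurable \<mu>" using f g by (auto simp: dens_class_def)
  have bd: "\<And>x. x \<in> space \<mu> \<Longrightarrow> (f x - g x)^2 \<le> (\<beta> - \<alpha>)^2"
  proof -
    fix x assume "x \<in> space \<mu>"
    then have "\<alpha> \<le> f x" "f x \<le> \<beta>" "\<alpha> \<le> g x" "g x \<le> \<beta>" using f g sp by (auto simp: dens_class_def)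
    then have "\<bar>f x - g x\<bar> \<le> \<bar>\<beta> - \<alpha>\<bar>" by linarith
    then show "(f x - g x)^2 \<le> (\<beta> - \<alpha>)^2" by (metis power2_le_iff_abs_le abs_ge_zero order.trans abs_le_square_iff)
  qed
  show I: "integrable \<mu> (\<lambda>x. (f x - g x)^2)"
    apply (rule integrable_const_bound[where B="(\<beta> - \<alpha>)^2"])
    using bd fm by auto
  have "(\<integral>x. (f x - g x)^2 \<partial>\<mu>) \<le> (\<integral>x. (\<beta> - \<alpha>)^2 \<partial>\<mu>)"
    by (rule integral_mono[OF I]) (use bd in auto)
  then show "(\<integral>x. (f x - g x)^2 \<partial>\<mu>) \<le> (\<beta> - \<alpha>)^2" by (simp add: prob_space)
qed

lemma L2dist_nonneg: "L2dist \<mu> f g \<ge> 0"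
  unfolding L2dist_def by (simp add: integral_nonneg_AE)

lemma L2dist_self: "L2dist \<mu> f f = 0"
  unfolding L2dist_def by simp

lemma L2dist_bd:
  assumes "prob_space \<mu>" "space \<mu> = B" "f \<in> dens_class B \<mu> \<alpha> \<beta>" "g \<in> dens_class B \<mu> \<alpha> \<beta>" "\<alpha> \<le> \<beta>"
  shows "L2dist \<mu> f g \<le> \<beta> - \<alpha>"
proof -
  have "L2dist \<mu> f g \<le> sqrt ((\<beta> - \<alpha>)^2)" unfolding L2dist_def
    using sq_int(2)[OF assms(1-4)] real_sqrt_le_mono by blast
  then show ?thesis using assms(5) by simp
qed

lemma L2dist_seg: "L2dist \<mu> (\<lambda>x. s * f x + (1 - s) * f0 x) f0 = \<bar>s\<bar> * L2dist \<mu> f f0"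
proof -
  have "(\<lambda>x. (s * f x + (1 - s) * f0 x - f0 x)^2) = (\<lambda>x. s^2 * (f x - f0 x)^2)"
    by (rule ext) (simp add: algebra_simps power2_eq_square)
  then show ?thesis unfolding L2dist_def by (simp add: real_sqrt_mult)
qed

lemma L2dist_tri2:
  assumes "prob_space \<mu>" "space \<mu> = B" "f \<in> dens_class B \<mu> \<alpha> \<beta>" "g \<in> dens_class B \<mu> \<alpha> \<beta>"
    "h \<in> dens_class B \<mu> \<alpha> \<beta>"
  shows "(L2dist \<mu> f g)^2 \<le> 2 * (L2dist \<mu> f h)^2 + 2 * (L2dist \<mu> g h)^2"
proof -
  have i1: "integrable \<mu> (\<lambda>x. (f x - g x)^2)" by (rule sq_int(1)[OF assms(1-4)])
  have i2: "integrable \<mu> (\<lambda>x. (f x - h x)^2)" by (rule sq_int(1)[OF assms(1,2,3,5)])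
  have i3: "integrable \<mu> (\<lambda>x. (g x - h x)^2)" by (rule sq_int(1)[OF assms(1,2,4,5)])
  have "(\<integral>x. (f x - g x)^2 \<partial>\<mu>) \<le> (\<integral>x. 2 * (f x - h x)^2 + 2 * (g x - h x)^2 \<partial>\<mu>)"
  proof (rule integral_mono[OF i1])
    show "integrable \<mu> (\<lambda>x. 2 * (f x - h x)^2 + 2 * (g x - h x)^2)" using i2 i3 by auto
    fix x
    have "0 \<le> ((f x - h x) + (g x - h x))^2" by simp
    then show "(f x - g x)^2 \<le> 2 * (f x - h x)^2 + 2 * (g x - h x)^2"
      by (simp add: power2_eq_square algebra_simps)
  qed
  also have "\<dots> = 2 * (\<integral>x. (f x - h x)^2 \<partial>\<mu>) + 2 * (\<integral>x. (g x - h x)^2 \<partial>\<mu>)"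
    using i2 i3 by simp
  finally show ?thesis unfolding L2dist_def
    by (simp add: integral_nonneg_AE)
qed

lemma pack_le1:
  assumes "\<And>f g. f \<in> S \<Longrightarrow> g \<in> S \<Longrightarrow> L2dist \<mu> f g \<le> \<eta>"
  shows "packing_number \<mu> \<eta> S \<le> 1"
  unfolding packing_number_def
proof (rule Sup_least, clarify)
  fix P assume P: "finite P" "P \<subseteq> S" "\<forall>f\<in>P. \<forall>g\<in>P. f \<noteq> g \<longrightarrow> \<eta> < L2dist \<mu> f g"
  have "\<forall>a\<in>P. \<forall>b\<in>P. a = b"
  proof (intro ballI, rule ccontr)
    fix a b assume "a \<in> P" "b \<in> P" "a \<noteq> b"
    then show False using P assms[of a b] by force
  qed
  then have "card P \<le> 1" using card_le_Suc0_iff_eq[OF P(1)] by simp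
  then show "ereal (real (card P)) \<le> 1" by simp
qed

lemma pack_ge2:
  assumes "f \<in> S" "g \<in> S" "f \<noteq> g" "L2dist \<mu> f g > \<eta>" "L2dist \<mu> g f > \<eta>"
  shows "packing_number \<mu> \<eta> S \<ge> 2"
proof -
  have "ereal (real (card {f, g})) \<in> {ereal (real (card P)) | P. finite P \<and> P \<subseteq> S \<and>
        (\<forall>f\<in>P. \<forall>g\<in>P. f \<noteq> g \<longrightarrow> L2dist \<mu> f g > \<eta>)}"
    using assms by blast
  then have "ereal (real (card {f, g})) \<le> packing_number \<mu> \<eta> S"
    unfolding packing_number_def by (rule Sup_upper)
  then show ?thesis using assms(3) by simp
qed

lemma ln_ereal_le0: "x \<le> 1 \<Longrightarrow> ln_ereal x \<le> 0"
  unfolding ln_ereal_def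
  by (cases x) auto

lemma ln_ereal_ge: "x \<ge> 2 \<Longrightarrow> ln_ereal x \<ge> ln 2"
  unfolding ln_ereal_def
  by (cases x) auto

theorem mainTheorem5:
  shows "\<exists>c0>0. \<forall>c\<ge>c0. \<forall>(B :: 'a::euclidean_space set) (\<mu> :: 'a measure) (\<alpha>::real) (\<beta>::real)
           (F :: ('a \<Rightarrow> real) set) (k::real).
     compact B \<and> B \<in> sets borel \<and> emeasure lborel B > 0 \<and>
     prob_space \<mu> \<and> space \<mu> = B \<and> sets \<mu> = sets (restrict_space borel B) \<and>
     0 < \<alpha> \<and> \<alpha> < \<beta> \<and> F \<subseteq> dens_class B \<mu> \<alpha> \<beta> \<and> star_shaped_fun F \<and> k > 7
     \<longrightarrow> (\<exists>C>0. \<forall>(N::nat) (\<epsilon>::real). N \<ge> 1 \<and> \<epsilon> < k / real N \<longrightarrow>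
            (let d = L2diam \<mu> F; t = tau_star \<mu> F N c in
               max (min (t^2) (d^2)) (min \<epsilon> (d^2)) \<le> C * min (t^2) (d^2) \<and>
               min (t^2) (d^2) \<le> C * max (min (t^2) (d^2)) (min \<epsilon> (d^2))))"
proof (rule exI[of _ 2], intro conjI allI impI, simp)
  fix c :: real and B :: "'a set" and \<mu> :: "'a measure" and \<alpha> \<beta> :: real and F :: "('a \<Rightarrow> real) set" and k :: real
  assume c2: "2 \<le> c"
  assume H: "compact B \<and> B \<in> sets borel \<and> emeasure lborel B > 0 \<and>
     prob_space \<mu> \<and> space \<mu> = B \<and> sets \<mu> = sets (restrict_space borel B) \<and>
     0 < \<alpha> \<and> \<alpha> < \<beta> \<and> F \<subseteq> dens_class B \<mu> \<alpha> \<beta> \<and> star_shaped_fun F \<and> k > 7"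
  then have P: "prob_space \<mu>" and sp: "space \<mu> = B" and ab: "\<alpha> < \<beta>" and FD: "F \<subseteq> dens_class B \<mu> \<alpha> \<beta>"
    and st: "star_shaped_fun F" and k7: "k > 7" by auto
  obtain f0 where f0: "f0 \<in> F" and seg: "\<And>f t. f \<in> F \<Longrightarrow> 0 \<le> t \<Longrightarrow> t \<le> 1 \<Longrightarrow> (\<lambda>x. t * f x + (1 - t) * f0 x) \<in> F"
    using st unfolding star_shaped_fun_def by blast
  define D where "D = \<beta> - \<alpha>"
  have D0: "D > 0" using ab by (simp add: D_def)
  have dbd: "\<And>f g. f \<in> F \<Longrightarrow> g \<in> F \<Longrightarrow> L2dist \<mu> f g \<le> D"
    unfolding D_def using L2dist_bd[OF P sp] FD ab by (meson less_imp_le subsetD)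
  define d where "d = L2diam \<mu> F"
  define DS where "DS = {L2dist \<mu> f g | f g. f \<in> F \<and> g \<in> F}"
  have DSne: "DS \<noteq> {}" using f0 unfolding DS_def by blast
  have DSbdd: "bdd_above DS" unfolding DS_def bdd_above_def using dbd by blast
  have d_def': "d = Sup DS" unfolding d_def DS_def L2diam_def by simp
  have dge: "\<And>f g. f \<in> F \<Longrightarrow> g \<in> F \<Longrightarrow> L2dist \<mu> f g \<le> d"
    unfolding d_def' using DSbdd by (auto intro!: cSup_upper simp: DS_def)
  have d0: "d \<ge> 0" using dge[OF f0 f0] L2dist_self[of \<mu> f0] by simp
  define C where "C = 16 * k / ln 2 + 16"
  have ln2: "ln (2::real) > 0" by simp
  have C16: "C \<ge> 16" unfolding C_def using k7 ln2 by simp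
  have Ck: "C \<ge> k / ln 2" unfolding C_def using k7 ln2 by (simp add: field_simps)
  show "\<exists>C>0. \<forall>(N::nat) (\<epsilon>::real). N \<ge> 1 \<and> \<epsilon> < k / real N \<longrightarrow>
            (let d = L2diam \<mu> F; t = tau_star \<mu> F N c in
               max (min (t^2) (d^2)) (min \<epsilon> (d^2)) \<le> C * min (t^2) (d^2) \<and>
               min (t^2) (d^2) \<le> C * max (min (t^2) (d^2)) (min \<epsilon> (d^2)))"
  proof (rule exI[of _ C], intro conjI allI impI)
    show "C > 0" using C16 by simp
    fix N :: nat and \<epsilon> :: real
    assume Ne: "1 \<le> N \<and> \<epsilon> < k / real N"
    then have N1: "real N \<ge> 1" and eps: "\<epsilon> < k / real N" by auto
    define t where "t = tau_star \<mu> F N c"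
    define m where "m = min (t^2) (d^2)"
    have m0: "m \<ge> 0" unfolding m_def by simp
    have key: "min \<epsilon> (d^2) \<le> C * m"
    proof (cases "d = 0")
      case True
      then show ?thesis using m0 C16 by (smt (verit) mult_nonneg_nonneg power_zero_numeral)
    next
      case False
      then have dpos: "d > 0" using d0 by simp
      have "\<exists>x\<in>DS. d / 2 < x" using less_cSup_iff[OF DSne DSbdd, of "d/2"] dpos d_def' by simp
      then obtain f g where fF: "f \<in> F" and gF: "g \<in> F" and fg: "L2dist \<mu> f g > d / 2"
        unfolding DS_def by blast
      have tri: "(L2dist \<mu> f g)^2 \<le> 2 * (L2dist \<mu> f f0)^2 + 2 * (L2dist \<mu> g f0)^2"
        using L2dist_tri2[OF P sp] FD fF gF f0 by blast
      have "\<exists>h\<in>F. L2dist \<mu> h f0 > d / 4"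
      proof (rule ccontr)
        assume "\<not> ?thesis"
        then have a: "L2dist \<mu> f f0 \<le> d/4" "L2dist \<mu> g f0 \<le> d/4" using fF gF by force+
        have "(L2dist \<mu> f f0)^2 \<le> (d/4)^2" using a(1) L2dist_nonneg power_mono by blast
        moreover have "(L2dist \<mu> g f0)^2 \<le> (d/4)^2" using a(2) L2dist_nonneg power_mono by blast
        moreover have "(d/2)^2 < (L2dist \<mu> f g)^2" using fg dpos
          by (simp add: power_strict_mono)
        ultimately show False using tri by (simp add: power2_eq_square)
      qed
      then obtain h where hF: "h \<in> F" and hr: "L2dist \<mu> h f0 > d / 4" by blast
      define r where "r = L2dist \<mu> h f0"
      have rpos: "r > 0" using hr dpos r_def by simp
      define TS where "TS = {\<tau>. 0 \<le> \<tau> \<and> ereal (real N * \<tau>^2) \<le> ln_ereal (loc_packing \<mu> F \<tau> c)}"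
      have t_def': "t = Sup TS" unfolding t_def tau_star_def TS_def by simp
      have TSbdd: "bdd_above TS" unfolding bdd_above_def
      proof (rule exI[of _ "c * D"], intro ballI, rule ccontr)
        fix \<tau> assume "\<tau> \<in> TS" and nle: "\<not> \<tau> \<le> c * D"
        then have t0: "\<tau> \<ge> 0" and tin: "ereal (real N * \<tau>^2) \<le> ln_ereal (loc_packing \<mu> F \<tau> c)"
          unfolding TS_def by auto
        have "\<tau> / c > D" using nle c2 by (simp add: field_simps)
        have "loc_packing \<mu> F \<tau> c \<le> 1" unfolding loc_packing_def
        proof (rule SUP_least)
          fix g assume "g \<in> F"
          show "packing_number \<mu> (\<tau> / c) (F \<inter> L2ball \<mu> g \<tau>) \<le> 1"
            by (rule pack_le1) (use dbd \<open>\<tau> / c > D\<close> in force)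
        qed
        then have "ln_ereal (loc_packing \<mu> F \<tau> c) \<le> 0" by (rule ln_ereal_le0)
        then have "real N * \<tau>^2 \<le> 0" using tin by (metis order.trans zero_ereal_def ereal_less_eq(3))
        then have "\<tau>^2 \<le> 0" using N1 by (simp add: mult_le_0_iff)
        then have "\<tau> = 0" by simp
        then show False using nle c2 D0 by simp
      qed
      define \<tau>1 where "\<tau>1 = min (sqrt (ln 2 / real N)) r"
      have t1pos: "\<tau>1 > 0" unfolding \<tau>1_def using rpos N1 by simp
      have t1r: "\<tau>1 \<le> r" unfolding \<tau>1_def by simp
      define s where "s = \<tau>1 / r"
      have s01: "0 \<le> s" "s \<le> 1" unfolding s_def using t1pos t1r rpos by auto
      define hs where "hs = (\<lambda>x. s * h x + (1 - s) * f0 x)"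
      have hsF: "hs \<in> F" unfolding hs_def using seg[OF hF s01] .
      have dhs: "L2dist \<mu> hs f0 = \<tau>1" unfolding hs_def L2dist_seg
        using s01 rpos t1pos by (simp add: s_def r_def)
      have dhs': "L2dist \<mu> f0 hs = \<tau>1" using dhs by (simp add: L2dist_def power2_commute)
      have ltc: "\<tau>1 / c < \<tau>1" using t1pos c2 by (simp add: field_simps)
      have neq: "f0 \<noteq> hs" using dhs t1pos L2dist_self[of \<mu> f0] by auto
      have "packing_number \<mu> (\<tau>1 / c) (F \<inter> L2ball \<mu> f0 \<tau>1) \<ge> 2"
        apply (rule pack_ge2[of f0 _ hs])
        using f0 hsF dhs dhs' ltc neq L2dist_self[of \<mu> f0] t1pos by (auto simp: L2ball_def)
      moreover have "packing_number \<mu> (\<tau>1 / c) (F \<inter> L2ball \<mu> f0 \<tau>1) \<le> loc_packing \<mu> F \<tau>1 c"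
        unfolding loc_packing_def using f0 by (rule SUP_upper)
      ultimately have "ln_ereal (loc_packing \<mu> F \<tau>1 c) \<ge> ln 2" using ln_ereal_ge by fastforce
      moreover have "real N * \<tau>1^2 \<le> ln 2"
      proof -
        have "\<tau>1^2 \<le> (sqrt (ln 2 / real N))^2" unfolding \<tau>1_def using t1pos \<tau>1_def
          by (intro power_mono) auto
        also have "\<dots> = ln 2 / real N" using N1 by simp
        finally show ?thesis using N1 by (simp add: field_simps)
      qed
      ultimately have "\<tau>1 \<in> TS" unfolding TS_def using t1pos
        by (metis (mono_tags, lifting) ereal_less_eq(3) less_imp_le mem_Collect_eq order.trans)
      then have tge: "t \<ge> \<tau>1" unfolding t_def' using TSbdd by (rule cSup_upper)
      have t2: "t^2 \<ge> \<tau>1^2" using tge t1pos by (intro power_mono) auto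
      have r2: "r^2 \<ge> d^2 / 16"
      proof -
        have "(d/4)^2 \<le> r^2" using hr dpos r_def by (intro power_mono) auto
        then show ?thesis by (simp add: power_divide)
      qed
      have mlow: "m \<ge> min (ln 2 / real N) (d^2 / 16)"
      proof -
        have a0: "ln 2 / real N \<ge> 0" using N1 by simp
        have "\<tau>1^2 \<ge> min (ln 2 / real N) (r^2)"
        proof (cases "sqrt (ln 2 / real N) \<le> r")
          case True
          then have "\<tau>1 = sqrt (ln 2 / real N)" unfolding \<tau>1_def by simp
          then have "\<tau>1^2 = ln 2 / real N" using a0 by simp
          then show ?thesis by simp
        next
          case False
          then have "\<tau>1 = r" unfolding \<tau>1_def by simp
          then show ?thesis by simp
        qed
        moreover have "min (ln 2 / real N) (d^2 / 16) \<le> min (ln 2 / real N) (r^2)"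
          using r2 by (rule min.mono[OF order.refl])
        ultimately have X: "min (ln 2 / real N) (d^2 / 16) \<le> t^2" using t2 by linarith
        have Y: "min (ln 2 / real N) (d^2 / 16) \<le> d^2" by (simp add: min.coboundedI2)
        show ?thesis unfolding m_def by (rule min.boundedI[OF X Y])
      qed
      then show ?thesis
      proof (cases "ln 2 / real N \<le> d^2 / 16")
        case True
        then have mm: "m \<ge> ln 2 / real N" using mlow by simp
        have "min \<epsilon> (d^2) \<le> k / real N" using eps by simp
        also have "\<dots> = (k / ln 2) * (ln 2 / real N)" using ln2 by simp
        also have "\<dots> \<le> C * m"
          by (rule mult_mono[OF Ck mm]) (use C16 N1 in auto)
        finally show ?thesis .
      next
        case False
        then have mm: "m \<ge> d^2 / 16" using mlow by simp
        have "min \<epsilon> (d^2) \<le> d^2" by simp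
        also have "\<dots> \<le> 16 * m" using mm by simp
        also have "\<dots> \<le> C * m" using C16 m0 by (intro mult_right_mono) auto
        finally show ?thesis .
      qed
    qed
    have mC: "m \<le> C * m" using C16 m0 mult_right_mono[of 1 C m] by simp
    have "max m (min \<epsilon> (d^2)) \<le> C * m" using key mC by simp
    moreover have "m \<le> C * max m (min \<epsilon> (d^2))"
    proof -
      have "C * m \<le> C * max m (min \<epsilon> (d^2))" using C16 by (intro mult_left_mono) auto
      then show ?thesis using mC by linarith
    qed
    ultimately show "let d = L2diam \<mu> F; t = tau_star \<mu> F N c in
               max (min (t^2) (d^2)) (min \<epsilon> (d^2)) \<le> C * min (t^2) (d^2) \<and>
               min (t^2) (d^2) \<le> C * max (min (t^2) (d^2)) (min \<epsilon> (d^2))"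
      unfolding m_def t_def d_def Let_def by (rule conjI)
  qed
qed

end
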